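(* Let $M$ be a semiprime (or prime) right $R$-module such that $S=\mathrm{End}_R(M)$ satisfies the ascending chain condition on principal left ideals. Then the following are equivalent: (i) $M$ is a quasi-Baer module; (ii) $M$ is an endo-AIP module; (iii) $M$ is a centrally endo-AIP module.
   Context: For $N\le M$, $l_S(N)=\{\phi\in S:\phi(N)=0\}$. A fully invariant submodule $N$ of $M$ is prime in $M$ if for every ideal $T$ of $S$ and every fully invariant submodule $N'$ of $M$, $T(N')\subseteq N$ implies $T(M)\subseteq N$ or $N'\subseteq N$; $N$ is semiprime if it is an intersection of prime submodules of $M$. $M$ is a prime (semiprime) module if $\{0\}$ is prime (semiprime) in $M$. $M$ is quasi-Baer if $l_S(N)$ is a direct summand of $S$ (i.e. $l_S(N)=Se$ for an idempotent $e$) for every fully invariant submodule $N$. An ideal $I$ of $S$ is right s-unital if for every $a\in I$ there is $x\in I$ with $ax=a$, and centrally s-unital if for every $a\in I$ there is $z\in I$ central in $S$ with $az=a$. $M$ is endo-AIP (resp. centrally endo-AIP) if $l_S(N)$ is right s-unital (resp. centrally s-unital) for every fully invariant submodule $N$ of $M$. *)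

theory Defs
  imports "HOL-Algebra.Algebra"
begin

text \<open>A right R-module: an abelian group M (additive structure of a ring record; its
multiplicative fields are unused) with a right action act x r = x r.\<close>

definition right_module ::
  "('r,'a) ring_scheme \<Rightarrow> ('m,'b) ring_scheme \<Rightarrow> ('m \<Rightarrow> 'r \<Rightarrow> 'm) \<Rightarrow> bool" where
  "right_module R M act \<longleftrightarrow> ring R \<and> abelian_group M \<and>
     (\<forall>x\<in>carrier M. \<forall>r\<in>carrier R. act x r \<in> carrier M) \<and>
     (\<forall>x\<in>carrier M. \<forall>y\<in>carrier M. \<forall>r\<in>carrier R.
         act (x \<oplus>\<^bsub>M\<^esub> y) r = act x r \<oplus>\<^bsub>M\<^esub> act y r) \<and>
     (\<forall>x\<in>carrier M. \<forall>r\<in>carrier R. \<forall>s\<in>carrier R.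
         act x (r \<oplus>\<^bsub>R\<^esub> s) = act x r \<oplus>\<^bsub>M\<^esub> act x s) \<and>
     (\<forall>x\<in>carrier M. \<forall>r\<in>carrier R. \<forall>s\<in>carrier R.
         act x (r \<otimes>\<^bsub>R\<^esub> s) = act (act x r) s) \<and>
     (\<forall>x\<in>carrier M. act x \<one>\<^bsub>R\<^esub> = x)"

definition End_set ::
  "('r,'a) ring_scheme \<Rightarrow> ('m,'b) ring_scheme \<Rightarrow> ('m \<Rightarrow> 'r \<Rightarrow> 'm) \<Rightarrow> ('m \<Rightarrow> 'm) set" where
  "End_set R M act = {f. f \<in> carrier M \<rightarrow>\<^sub>E carrier M \<and>
     (\<forall>x\<in>carrier M. \<forall>y\<in>carrier M. f (x \<oplus>\<^bsub>M\<^esub> y) = f x \<oplus>\<^bsub>M\<^esub> f y) \<and>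
     (\<forall>x\<in>carrier M. \<forall>r\<in>carrier R. f (act x r) = act (f x) r)}"

definition End_ring ::
  "('r,'a) ring_scheme \<Rightarrow> ('m,'b) ring_scheme \<Rightarrow> ('m \<Rightarrow> 'r \<Rightarrow> 'm) \<Rightarrow> ('m \<Rightarrow> 'm) ring" where
  "End_ring R M act =
     \<lparr>partial_object.carrier = End_set R M act,
      monoid.mult = (\<lambda>f g. \<lambda>x\<in>carrier M. f (g x)),
      monoid.one = (\<lambda>x\<in>carrier M. x),
      ring.zero = (\<lambda>x\<in>carrier M. \<zero>\<^bsub>M\<^esub>),
      ring.add = (\<lambda>f g. \<lambda>x\<in>carrier M. f x \<oplus>\<^bsub>M\<^esub> g x)\<rparr>"

definition submodule ::
  "('r,'a) ring_scheme \<Rightarrow> ('m,'b) ring_scheme \<Rightarrow> ('m \<Rightarrow> 'r \<Rightarrow> 'm) \<Rightarrow> 'm set \<Rightarrow> bool" where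
  "submodule R M act N \<longleftrightarrow> subgroup N (add_monoid M) \<and>
     (\<forall>x\<in>N. \<forall>r\<in>carrier R. act x r \<in> N)"

definition fully_invariant ::
  "('r,'a) ring_scheme \<Rightarrow> ('m,'b) ring_scheme \<Rightarrow> ('m \<Rightarrow> 'r \<Rightarrow> 'm) \<Rightarrow> 'm set \<Rightarrow> bool" where
  "fully_invariant R M act N \<longleftrightarrow> submodule R M act N \<and>
     (\<forall>f\<in>End_set R M act. \<forall>x\<in>N. f x \<in> N)"

definition ideal_image :: "('m,'b) ring_scheme \<Rightarrow> ('m \<Rightarrow> 'm) set \<Rightarrow> 'm set \<Rightarrow> 'm set" where
  "ideal_image M T N = generate (add_monoid M) {f x | f x. f \<in> T \<and> x \<in> N}"

definition prime_in ::
  "('r,'a) ring_scheme \<Rightarrow> ('m,'b) ring_scheme \<Rightarrow> ('m \<Rightarrow> 'r \<Rightarrow> 'm) \<Rightarrow> 'm set \<Rightarrow> bool" where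
  "prime_in R M act N \<longleftrightarrow> fully_invariant R M act N \<and>
     (\<forall>T N'. ideal T (End_ring R M act) \<longrightarrow> fully_invariant R M act N' \<longrightarrow>
        ideal_image M T N' \<subseteq> N \<longrightarrow>
        ideal_image M T (carrier M) \<subseteq> N \<or> N' \<subseteq> N)"

definition semiprime_in ::
  "('r,'a) ring_scheme \<Rightarrow> ('m,'b) ring_scheme \<Rightarrow> ('m \<Rightarrow> 'r \<Rightarrow> 'm) \<Rightarrow> 'm set \<Rightarrow> bool" where
  "semiprime_in R M act N \<longleftrightarrow> fully_invariant R M act N \<and>
     (\<exists>\<P>. \<P> \<noteq> {} \<and> (\<forall>P\<in>\<P>. prime_in R M act P) \<and> N = \<Inter>\<P>)"

definition prime_module ::
  "('r,'a) ring_scheme \<Rightarrow> ('m,'b) ring_scheme \<Rightarrow> ('m \<Rightarrow> 'r \<Rightarrow> 'm) \<Rightarrow> bool" where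
  "prime_module R M act \<longleftrightarrow> prime_in R M act {\<zero>\<^bsub>M\<^esub>}"

definition semiprime_module ::
  "('r,'a) ring_scheme \<Rightarrow> ('m,'b) ring_scheme \<Rightarrow> ('m \<Rightarrow> 'r \<Rightarrow> 'm) \<Rightarrow> bool" where
  "semiprime_module R M act \<longleftrightarrow> semiprime_in R M act {\<zero>\<^bsub>M\<^esub>}"

definition l_ann ::
  "('r,'a) ring_scheme \<Rightarrow> ('m,'b) ring_scheme \<Rightarrow> ('m \<Rightarrow> 'r \<Rightarrow> 'm) \<Rightarrow> 'm set \<Rightarrow> ('m \<Rightarrow> 'm) set" where
  "l_ann R M act N = {f \<in> End_set R M act. \<forall>x\<in>N. f x = \<zero>\<^bsub>M\<^esub>}"

definition principal_left_ideal :: "('s,'c) ring_scheme \<Rightarrow> 's \<Rightarrow> 's set" where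
  "principal_left_ideal S a = {s \<otimes>\<^bsub>S\<^esub> a | s. s \<in> carrier S}"

definition acc_principal_left :: "('s,'c) ring_scheme \<Rightarrow> bool" where
  "acc_principal_left S \<longleftrightarrow>
     (\<forall>a :: nat \<Rightarrow> 's. (\<forall>n. a n \<in> carrier S) \<longrightarrow>
        (\<forall>n. principal_left_ideal S (a n) \<subseteq> principal_left_ideal S (a (Suc n))) \<longrightarrow>
        (\<exists>m. \<forall>n\<ge>m. principal_left_ideal S (a n) = principal_left_ideal S (a m)))"

definition right_s_unital :: "('s,'c) ring_scheme \<Rightarrow> 's set \<Rightarrow> bool" where
  "right_s_unital S I \<longleftrightarrow> (\<forall>a\<in>I. \<exists>x\<in>I. a \<otimes>\<^bsub>S\<^esub> x = a)"

definition centrally_s_unital :: "('s,'c) ring_scheme \<Rightarrow> 's set \<Rightarrow> bool" where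
  "centrally_s_unital S I \<longleftrightarrow>
     (\<forall>a\<in>I. \<exists>z\<in>I. (\<forall>s\<in>carrier S. z \<otimes>\<^bsub>S\<^esub> s = s \<otimes>\<^bsub>S\<^esub> z) \<and> a \<otimes>\<^bsub>S\<^esub> z = a)"

definition quasi_Baer ::
  "('r,'a) ring_scheme \<Rightarrow> ('m,'b) ring_scheme \<Rightarrow> ('m \<Rightarrow> 'r \<Rightarrow> 'm) \<Rightarrow> bool" where
  "quasi_Baer R M act \<longleftrightarrow>
     (\<forall>N. fully_invariant R M act N \<longrightarrow>
        (\<exists>e\<in>carrier (End_ring R M act).
           e \<otimes>\<^bsub>End_ring R M act\<^esub> e = e \<and>
           l_ann R M act N = principal_left_ideal (End_ring R M act) e))"

definition endo_AIP ::
  "('r,'a) ring_scheme \<Rightarrow> ('m,'b) ring_scheme \<Rightarrow> ('m \<Rightarrow> 'r \<Rightarrow> 'm) \<Rightarrow> bool" where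
  "endo_AIP R M act \<longleftrightarrow>
     (\<forall>N. fully_invariant R M act N \<longrightarrow>
        right_s_unital (End_ring R M act) (l_ann R M act N))"

definition centrally_endo_AIP ::
  "('r,'a) ring_scheme \<Rightarrow> ('m,'b) ring_scheme \<Rightarrow> ('m \<Rightarrow> 'r \<Rightarrow> 'm) \<Rightarrow> bool" where
  "centrally_endo_AIP R M act \<longleftrightarrow>
     (\<forall>N. fully_invariant R M act N \<longrightarrow>
        centrally_s_unital (End_ring R M act) (l_ann R M act N))"

end

theory Submission
  imports Defs
begin


context ring
begin

lemma neg_bex_ball: "\<not> (\<exists>x0\<in>I. \<forall>y\<in>I. Q x0 y) \<Longrightarrow> \<forall>x\<in>I. \<exists>y. y \<in> I \<and> \<not> Q x y"
  by blast


lemma PL_self: "x \<in> carrier R \<Longrightarrow> x \<in> principal_left_ideal R x"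
proof -
  assume x: "x \<in> carrier R"
  have "x = \<one> \<otimes> x" using x by simp
  thus ?thesis unfolding principal_left_ideal_def by blast
qed

lemma common_unit:
  assumes I: "ideal I R" and u: "right_s_unital R I" and a: "a \<in> I" and b: "b \<in> I"
  shows "\<exists>z\<in>I. a \<otimes> z = a \<and> b \<otimes> z = b"
proof -
  interpret J: ideal I R by (rule I)
  have IC: "I \<subseteq> carrier R" by (rule J.a_subset)
  obtain x where x: "x \<in> I" "a \<otimes> x = a" using u a unfolding right_s_unital_def by blast
  define c where "c = b \<ominus> b \<otimes> x"
  have c: "c \<in> I" unfolding c_def a_minus_def using b x IC by (simp add: J.I_r_closed)
  obtain y where y: "y \<in> I" "c \<otimes> y = c" using u c unfolding right_s_unital_def by blast
  define z where "z = x \<oplus> y \<ominus> x \<otimes> y"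
  have xc: "x \<in> carrier R" "y \<in> carrier R" "a \<in> carrier R" "b \<in> carrier R" using IC x y a b by auto
  have zI: "z \<in> I" unfolding z_def a_minus_def using x y xc by (simp add: J.I_r_closed)
  have "a \<otimes> z = a \<otimes> x \<oplus> a \<otimes> y \<ominus> a \<otimes> x \<otimes> y" unfolding z_def using xc
    by (simp add: r_distr r_minus a_minus_def m_assoc)
  also have "\<dots> = a" using x xc by (simp add: a_minus_def r_neg a_assoc)
  finally have 1: "a \<otimes> z = a" .
  have "b \<otimes> z = b \<otimes> x \<oplus> (b \<otimes> y \<ominus> b \<otimes> x \<otimes> y)" unfolding z_def using xc
    by (simp add: r_distr r_minus a_minus_def m_assoc a_assoc)
  also have "b \<otimes> y \<ominus> b \<otimes> x \<otimes> y = c \<otimes> y" unfolding c_def using xc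
    by (simp add: l_distr l_minus a_minus_def)
  also have "b \<otimes> x \<oplus> c \<otimes> y = b" using y xc unfolding c_def
    by (simp add: a_minus_def add.m_lcomm r_neg)
  finally have 2: "b \<otimes> z = b" .
  show ?thesis using 1 2 zI by blast
qed

lemma PL_maximal:
  assumes I: "ideal I R" and acc: "acc_principal_left R"
  shows "\<exists>x0\<in>I. \<forall>y\<in>I. principal_left_ideal R x0 \<subseteq> principal_left_ideal R y \<longrightarrow>
            principal_left_ideal R y = principal_left_ideal R x0"
proof (rule ccontr)
  let ?P = "principal_left_ideal R"
  assume "\<not> ?thesis"
  hence "\<forall>x\<in>I. \<exists>y. y \<in> I \<and> \<not> (?P x \<subseteq> ?P y \<longrightarrow> ?P y = ?P x)"
    by (rule neg_bex_ball)
  hence "\<forall>x\<in>I. \<exists>y. y \<in> I \<and> ?P x \<subseteq> ?P y \<and> ?P y \<noteq> ?P x" by simp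
  from bchoice[OF this] obtain f where f0: "\<forall>x\<in>I. f x \<in> I \<and> ?P x \<subseteq> ?P (f x) \<and> ?P (f x) \<noteq> ?P x"
    by blast
  have f: "f x \<in> I \<and> ?P x \<subseteq> ?P (f x) \<and> ?P (f x) \<noteq> ?P x" if "x \<in> I" for x using f0 that by blast
  interpret J: ideal I R by (rule I)
  have IC: "I \<subseteq> carrier R" by (rule J.a_subset)
  have z: "\<zero> \<in> I" by simp
  define a where "a n = (f ^^ n) \<zero>" for n
  have aI: "a n \<in> I" for n by (induct n) (auto simp: a_def z f)
  have inc: "?P (a n) \<subseteq> ?P (a (Suc n))" for n using f[OF aI[of n]] by (simp add: a_def)
  have aC: "a n \<in> carrier R" for n using aI IC by blast
  obtain m where m: "\<forall>n\<ge>m. ?P (a n) = ?P (a m)"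
    using acc[unfolded acc_principal_left_def, rule_format, of a, OF aC inc] by blast
  have "?P (a (Suc m)) = ?P (a m)" by (rule m[rule_format]) simp
  moreover have "?P (a (Suc m)) \<noteq> ?P (a m)" using f[OF aI[of m]] by (simp add: a_def)
  ultimately show False by simp
qed

lemma s_unital_idem:
  assumes I: "ideal I R" and u: "right_s_unital R I" and acc: "acc_principal_left R"
  shows "\<exists>e\<in>carrier R. e \<otimes> e = e \<and> I = principal_left_ideal R e"
proof -
  let ?P = "principal_left_ideal R"
  interpret J: ideal I R by (rule I)
  have IC: "I \<subseteq> carrier R" by (rule J.a_subset)
  obtain x0 where x0: "x0 \<in> I" and mx: "\<And>y. y \<in> I \<Longrightarrow> ?P x0 \<subseteq> ?P y \<Longrightarrow> ?P y = ?P x0"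
    using PL_maximal[OF I acc] by blast
  have key: "\<exists>z\<in>I. a \<otimes> z = a \<and> x0 \<otimes> z = x0 \<and> ?P z = ?P x0" if a: "a \<in> I" for a
  proof -
    obtain z where z: "z \<in> I" "a \<otimes> z = a" "x0 \<otimes> z = x0" using common_unit[OF I u a x0] by blast
    have "?P x0 \<subseteq> ?P z"
    proof
      fix w assume "w \<in> ?P x0"
      then obtain s where s: "s \<in> carrier R" "w = s \<otimes> x0" unfolding principal_left_ideal_def by blast
      have "w = (s \<otimes> x0) \<otimes> z" using s z IC x0 by (simp add: m_assoc)
      thus "w \<in> ?P z" unfolding principal_left_ideal_def using s IC x0 by blast
    qed
    thus ?thesis using z mx by blast
  qed
  have sub: "I \<subseteq> ?P x0"
  proof
    fix a assume a: "a \<in> I"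
    obtain z where z: "z \<in> I" "a \<otimes> z = a" "?P z = ?P x0" using key[OF a] by blast
    have aC: "a \<in> carrier R" using a IC by blast
    have "a = a \<otimes> z" using z by simp
    hence "a \<in> ?P z" unfolding principal_left_ideal_def using aC by blast
    thus "a \<in> ?P x0" using z by simp
  qed
  have sup: "?P x0 \<subseteq> I" unfolding principal_left_ideal_def using x0 J.I_l_closed by blast
  obtain z where z: "z \<in> I" "x0 \<otimes> z = x0" "?P z = ?P x0" using key[OF x0] by blast
  have "z \<in> ?P x0" using z PL_self IC by blast
  then obtain t where t: "t \<in> carrier R" "z = t \<otimes> x0" unfolding principal_left_ideal_def by blast
  have "z \<otimes> z = t \<otimes> (x0 \<otimes> z)" using t z IC x0 by (simp add: m_assoc)
  also have "\<dots> = z" using z t by simp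
  finally show ?thesis using z sub sup IC by blast
qed

lemma idem_central:
  assumes sp: "\<And>a. a \<in> carrier R \<Longrightarrow> (\<And>u. u \<in> carrier R \<Longrightarrow> a \<otimes> u \<otimes> a = \<zero>) \<Longrightarrow> a = \<zero>"
    and I: "ideal I R" and e: "e \<in> carrier R" "e \<otimes> e = e" and Ie: "I = principal_left_ideal R e"
    and s: "s \<in> carrier R"
  shows "e \<otimes> s = s \<otimes> e"
proof -
  have R1: "e \<otimes> v \<otimes> e = e \<otimes> v" if v: "v \<in> carrier R" for v
  proof -
    have "e \<in> I" using Ie PL_self e by blast
    hence "e \<otimes> v \<in> I" using v ideal.I_r_closed[OF I] by blast
    then obtain t where t: "t \<in> carrier R" "e \<otimes> v = t \<otimes> e" using Ie unfolding principal_left_ideal_def by blast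
    have "e \<otimes> v \<otimes> e = t \<otimes> (e \<otimes> e)" using t e by (simp add: m_assoc)
    thus ?thesis using t e by simp
  qed
  define b where "b = s \<ominus> e \<otimes> s"
  have b: "b \<in> carrier R" unfolding b_def using s e by simp
  have "b \<otimes> e \<otimes> u \<otimes> (b \<otimes> e) = \<zero>" if u: "u \<in> carrier R" for u
  proof -
    have "e \<otimes> (u \<otimes> b) \<otimes> e = e \<otimes> (u \<otimes> b)" using R1 u b by simp
    have "e \<otimes> u \<otimes> b = e \<otimes> u \<otimes> s \<ominus> e \<otimes> u \<otimes> e \<otimes> s" unfolding b_def using u s e
      by (simp add: r_minus a_minus_def r_distr m_assoc)
    also have "\<dots> = \<zero>" using R1[OF u] u s e by (simp add: r_neg)
    finally have 0: "e \<otimes> u \<otimes> b = \<zero>" .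
    have "b \<otimes> e \<otimes> u \<otimes> (b \<otimes> e) = b \<otimes> ((e \<otimes> (u \<otimes> b)) \<otimes> e)" using b e u by (simp add: m_assoc)
    also have "\<dots> = b \<otimes> (e \<otimes> u \<otimes> b)" using R1[of "u \<otimes> b"] u b e by (simp add: m_assoc)
    also have "\<dots> = \<zero>" using 0 b by simp
    finally show ?thesis .
  qed
  hence "b \<otimes> e = \<zero>" by (rule sp[OF m_closed[OF b e(1)]])
  hence "s \<otimes> e \<ominus> e \<otimes> s \<otimes> e = \<zero>" unfolding b_def using s e by (simp add: l_minus a_minus_def l_distr)
  hence "s \<otimes> e = e \<otimes> s \<otimes> e" using r_right_minus_eq[of "s \<otimes> e" "e \<otimes> s \<otimes> e"] s e by simp
  thus ?thesis using R1[OF s] by simp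
qed

end

locale rmod =
  fixes R :: "('r,'a) ring_scheme" and M :: "('m,'b) ring_scheme" and act :: "'m \<Rightarrow> 'r \<Rightarrow> 'm"
  assumes rm: "right_module R M act"
begin

lemma Mab: "abelian_group M" using rm unfolding right_module_def by blast

sublocale Mg: abelian_group M by (rule Mab)

lemma dbl_zero: "y \<in> carrier M \<Longrightarrow> y \<oplus>\<^bsub>M\<^esub> y = y \<oplus>\<^bsub>M\<^esub> \<zero>\<^bsub>M\<^esub> \<Longrightarrow> y = \<zero>\<^bsub>M\<^esub>"
proof -
  assume y: "y \<in> carrier M" and h: "y \<oplus>\<^bsub>M\<^esub> y = y \<oplus>\<^bsub>M\<^esub> \<zero>\<^bsub>M\<^esub>"
  have "y = \<ominus>\<^bsub>M\<^esub> y \<oplus>\<^bsub>M\<^esub> (y \<oplus>\<^bsub>M\<^esub> y)" using y by (simp add: Mg.a_assoc[symmetric] Mg.l_neg)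
  also have "\<dots> = \<zero>\<^bsub>M\<^esub>" using y h by (simp add: Mg.l_neg)
  finally show ?thesis .
qed

lemma act_closed: "x \<in> carrier M \<Longrightarrow> r \<in> carrier R \<Longrightarrow> act x r \<in> carrier M"
  using rm unfolding right_module_def by blast

lemma act_add: "x \<in> carrier M \<Longrightarrow> y \<in> carrier M \<Longrightarrow> r \<in> carrier R \<Longrightarrow>
   act (x \<oplus>\<^bsub>M\<^esub> y) r = act x r \<oplus>\<^bsub>M\<^esub> act y r"
  using rm unfolding right_module_def by blast

lemma act_zero: "r \<in> carrier R \<Longrightarrow> act \<zero>\<^bsub>M\<^esub> r = \<zero>\<^bsub>M\<^esub>"
proof -
  assume r: "r \<in> carrier R"
  have "act \<zero>\<^bsub>M\<^esub> r \<oplus>\<^bsub>M\<^esub> act \<zero>\<^bsub>M\<^esub> r = act \<zero>\<^bsub>M\<^esub> r \<oplus>\<^bsub>M\<^esub> \<zero>\<^bsub>M\<^esub>"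
    using act_add[of "\<zero>\<^bsub>M\<^esub>" "\<zero>\<^bsub>M\<^esub>" r] r act_closed by simp
  thus ?thesis using r act_closed dbl_zero Mg.zero_closed by blast
qed

lemma act_neg: "x \<in> carrier M \<Longrightarrow> r \<in> carrier R \<Longrightarrow> act (\<ominus>\<^bsub>M\<^esub> x) r = \<ominus>\<^bsub>M\<^esub> act x r"
proof -
  assume x: "x \<in> carrier M" and r: "r \<in> carrier R"
  have "act (\<ominus>\<^bsub>M\<^esub> x) r \<oplus>\<^bsub>M\<^esub> act x r = \<zero>\<^bsub>M\<^esub>"
    using act_add[of "\<ominus>\<^bsub>M\<^esub> x" x r] x r act_zero by (simp add: Mg.l_neg)
  thus ?thesis using x r act_closed Mg.minus_equality by (metis Mg.a_inv_closed)
qed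

abbreviation S where "S \<equiv> End_ring R M act"

lemma S_carrier: "carrier S = End_set R M act" by (simp add: End_ring_def)
lemma S_mult: "f \<otimes>\<^bsub>S\<^esub> g = (\<lambda>x\<in>carrier M. f (g x))" by (simp add: End_ring_def)
lemma S_one: "\<one>\<^bsub>S\<^esub> = (\<lambda>x\<in>carrier M. x)" by (simp add: End_ring_def)
lemma S_zero: "\<zero>\<^bsub>S\<^esub> = (\<lambda>x\<in>carrier M. \<zero>\<^bsub>M\<^esub>)" by (simp add: End_ring_def)
lemma S_add: "f \<oplus>\<^bsub>S\<^esub> g = (\<lambda>x\<in>carrier M. f x \<oplus>\<^bsub>M\<^esub> g x)" by (simp add: End_ring_def)

lemma End_closed: "f \<in> End_set R M act \<Longrightarrow> x \<in> carrier M \<Longrightarrow> f x \<in> carrier M"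
  unfolding End_set_def by auto
lemma End_add: "f \<in> End_set R M act \<Longrightarrow> x \<in> carrier M \<Longrightarrow> y \<in> carrier M \<Longrightarrow>
  f (x \<oplus>\<^bsub>M\<^esub> y) = f x \<oplus>\<^bsub>M\<^esub> f y"
  unfolding End_set_def by auto
lemma End_act: "f \<in> End_set R M act \<Longrightarrow> x \<in> carrier M \<Longrightarrow> r \<in> carrier R \<Longrightarrow>
  f (act x r) = act (f x) r"
  unfolding End_set_def by auto
lemma End_ext: "f \<in> End_set R M act \<Longrightarrow> x \<notin> carrier M \<Longrightarrow> f x = undefined"
  unfolding End_set_def by auto
lemma End_eqI: "f \<in> End_set R M act \<Longrightarrow> g \<in> End_set R M act \<Longrightarrow>
  (\<And>x. x \<in> carrier M \<Longrightarrow> f x = g x) \<Longrightarrow> f = g"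
  by (rule ext) (metis End_ext)
lemma End_zero: "f \<in> End_set R M act \<Longrightarrow> f \<zero>\<^bsub>M\<^esub> = \<zero>\<^bsub>M\<^esub>"
proof -
  assume f: "f \<in> End_set R M act"
  have "f \<zero>\<^bsub>M\<^esub> \<oplus>\<^bsub>M\<^esub> f \<zero>\<^bsub>M\<^esub> = f \<zero>\<^bsub>M\<^esub> \<oplus>\<^bsub>M\<^esub> \<zero>\<^bsub>M\<^esub>"
    using End_add[OF f, of "\<zero>\<^bsub>M\<^esub>" "\<zero>\<^bsub>M\<^esub>"] End_closed[OF f] by simp
  thus ?thesis using End_closed[OF f] dbl_zero Mg.zero_closed by blast
qed
lemma End_neg: "f \<in> End_set R M act \<Longrightarrow> x \<in> carrier M \<Longrightarrow> f (\<ominus>\<^bsub>M\<^esub> x) = \<ominus>\<^bsub>M\<^esub> f x"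
proof -
  assume f: "f \<in> End_set R M act" and x: "x \<in> carrier M"
  have "f (\<ominus>\<^bsub>M\<^esub> x) \<oplus>\<^bsub>M\<^esub> f x = \<zero>\<^bsub>M\<^esub>"
    using End_add[OF f, of "\<ominus>\<^bsub>M\<^esub> x" x] x End_zero[OF f] by (simp add: Mg.l_neg)
  thus ?thesis using x End_closed[OF f] Mg.minus_equality by (metis Mg.a_inv_closed)
qed

lemma End_memI:
  assumes "\<And>x. x \<in> carrier M \<Longrightarrow> f x \<in> carrier M"
    and "\<And>x. x \<notin> carrier M \<Longrightarrow> f x = undefined"
    and "\<And>x y. x \<in> carrier M \<Longrightarrow> y \<in> carrier M \<Longrightarrow> f (x \<oplus>\<^bsub>M\<^esub> y) = f x \<oplus>\<^bsub>M\<^esub> f y"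
    and "\<And>x r. x \<in> carrier M \<Longrightarrow> r \<in> carrier R \<Longrightarrow> f (act x r) = act (f x) r"
  shows "f \<in> End_set R M act"
  unfolding End_set_def using assms by (auto simp: PiE_def extensional_def)

lemma S_ring: "ring S"
proof (rule ringI)
  show "abelian_group S"
  proof (rule abelian_groupI)
    fix x y assume x: "x \<in> carrier S" and y: "y \<in> carrier S"
    show "x \<oplus>\<^bsub>S\<^esub> y \<in> carrier S"
      unfolding S_add S_carrier
      using x y unfolding S_carrier
      by (intro End_memI) (auto simp: End_closed End_add End_act act_closed Mg.a_ac act_add)
    show "x \<oplus>\<^bsub>S\<^esub> y = y \<oplus>\<^bsub>S\<^esub> x"
      unfolding S_add using x y unfolding S_carrier by (auto simp: End_closed Mg.a_ac)
  next
    show "\<zero>\<^bsub>S\<^esub> \<in> carrier S"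
      unfolding S_zero S_carrier by (intro End_memI) (auto simp: act_zero act_closed)
  next
    fix x y z assume x: "x \<in> carrier S" and y: "y \<in> carrier S" and z: "z \<in> carrier S"
    show "x \<oplus>\<^bsub>S\<^esub> y \<oplus>\<^bsub>S\<^esub> z = x \<oplus>\<^bsub>S\<^esub> (y \<oplus>\<^bsub>S\<^esub> z)"
      unfolding S_add using x y z unfolding S_carrier by (auto simp: End_closed Mg.a_ac)
  next
    fix x assume x: "x \<in> carrier S"
    show "\<zero>\<^bsub>S\<^esub> \<oplus>\<^bsub>S\<^esub> x = x"
      unfolding S_add S_zero using x unfolding S_carrier
      by (intro ext) (auto simp: End_closed End_ext)
    show "\<exists>y\<in>carrier S. y \<oplus>\<^bsub>S\<^esub> x = \<zero>\<^bsub>S\<^esub>"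
    proof (intro bexI)
      show "(\<lambda>m\<in>carrier M. \<ominus>\<^bsub>M\<^esub> x m) \<in> carrier S"
        using x unfolding S_carrier
        by (intro End_memI) (auto simp: End_closed End_add End_act act_closed act_neg Mg.minus_add Mg.a_ac)
      show "(\<lambda>m\<in>carrier M. \<ominus>\<^bsub>M\<^esub> x m) \<oplus>\<^bsub>S\<^esub> x = \<zero>\<^bsub>S\<^esub>"
        unfolding S_add S_zero using x unfolding S_carrier
        by (intro ext) (auto simp: End_closed Mg.l_neg)
    qed
  qed
next
  show "monoid S"
  proof (rule monoidI)
    fix x y assume x: "x \<in> carrier S" and y: "y \<in> carrier S"
    show "x \<otimes>\<^bsub>S\<^esub> y \<in> carrier S"
      unfolding S_mult using x y unfolding S_carrier
      by (intro End_memI) (auto simp: End_closed End_add End_act act_closed)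
  next
    show "\<one>\<^bsub>S\<^esub> \<in> carrier S"
      unfolding S_one S_carrier by (intro End_memI) (auto simp: act_closed)
  next
    fix x y z assume x: "x \<in> carrier S" and y: "y \<in> carrier S" and z: "z \<in> carrier S"
    show "x \<otimes>\<^bsub>S\<^esub> y \<otimes>\<^bsub>S\<^esub> z = x \<otimes>\<^bsub>S\<^esub> (y \<otimes>\<^bsub>S\<^esub> z)"
      unfolding S_mult using x y z unfolding S_carrier by (auto simp: End_closed)
  next
    fix x assume x: "x \<in> carrier S"
    show "\<one>\<^bsub>S\<^esub> \<otimes>\<^bsub>S\<^esub> x = x"
      unfolding S_mult S_one using x unfolding S_carrier
      by (intro ext) (auto simp: End_closed End_ext)
    show "x \<otimes>\<^bsub>S\<^esub> \<one>\<^bsub>S\<^esub> = x"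
      unfolding S_mult S_one using x unfolding S_carrier
      by (intro ext) (auto simp: End_closed End_ext)
  qed
next
  fix x y z assume x: "x \<in> carrier S" and y: "y \<in> carrier S" and z: "z \<in> carrier S"
  show "(x \<oplus>\<^bsub>S\<^esub> y) \<otimes>\<^bsub>S\<^esub> z = x \<otimes>\<^bsub>S\<^esub> z \<oplus>\<^bsub>S\<^esub> y \<otimes>\<^bsub>S\<^esub> z"
    unfolding S_mult S_add using x y z unfolding S_carrier by (auto simp: End_closed)
  show "z \<otimes>\<^bsub>S\<^esub> (x \<oplus>\<^bsub>S\<^esub> y) = z \<otimes>\<^bsub>S\<^esub> x \<oplus>\<^bsub>S\<^esub> z \<otimes>\<^bsub>S\<^esub> y"
    unfolding S_mult S_add using x y z unfolding S_carrier by (auto simp: End_closed End_add)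
qed


sublocale Sr: ring S by (rule S_ring)

lemma S_neg: "f \<in> carrier S \<Longrightarrow> \<ominus>\<^bsub>S\<^esub> f = (\<lambda>m\<in>carrier M. \<ominus>\<^bsub>M\<^esub> f m)"
proof -
  assume x: "f \<in> carrier S"
  have 1: "(\<lambda>m\<in>carrier M. \<ominus>\<^bsub>M\<^esub> f m) \<in> carrier S"
    using x unfolding S_carrier
    by (intro End_memI) (auto simp: End_closed End_add End_act act_closed act_neg Mg.minus_add Mg.a_ac)
  have 2: "(\<lambda>m\<in>carrier M. \<ominus>\<^bsub>M\<^esub> f m) \<oplus>\<^bsub>S\<^esub> f = \<zero>\<^bsub>S\<^esub>"
    unfolding S_add S_zero using x unfolding S_carrier
    by (intro ext) (auto simp: End_closed Mg.l_neg)
  show ?thesis using Sr.minus_equality[OF 2 x 1] .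
qed

lemma fi_subset: "fully_invariant R M act N \<Longrightarrow> N \<subseteq> carrier M"
proof -
  assume "fully_invariant R M act N"
  hence "subgroup N (add_monoid M)" unfolding fully_invariant_def submodule_def by blast
  hence "N \<subseteq> carrier (add_monoid M)" by (rule subgroup.subset)
  thus ?thesis by simp
qed

lemma l_annI: "f \<in> carrier S \<Longrightarrow> (\<And>x. x \<in> N \<Longrightarrow> f x = \<zero>\<^bsub>M\<^esub>) \<Longrightarrow> f \<in> l_ann R M act N"
  unfolding l_ann_def S_carrier by blast
lemma l_annD1: "f \<in> l_ann R M act N \<Longrightarrow> f \<in> carrier S"
  unfolding l_ann_def S_carrier by blast
lemma l_annD2: "f \<in> l_ann R M act N \<Longrightarrow> x \<in> N \<Longrightarrow> f x = \<zero>\<^bsub>M\<^esub>"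
  unfolding l_ann_def by blast

lemma l_ann_ideal:
  assumes N: "fully_invariant R M act N"
  shows "ideal (l_ann R M act N) S"
proof (rule idealI[OF S_ring])
  have NC: "N \<subseteq> carrier M" using fi_subset[OF N] .
  show "subgroup (l_ann R M act N) (add_monoid S)"
  proof (rule Sr.add.subgroupI)
    show "l_ann R M act N \<subseteq> carrier S" using l_annD1 by blast
    have "\<zero>\<^bsub>S\<^esub> \<in> l_ann R M act N"
    proof (rule l_annI[OF Sr.zero_closed])
      fix x assume "x \<in> N"
      hence "x \<in> carrier M" using NC by blast
      thus "\<zero>\<^bsub>S\<^esub> x = \<zero>\<^bsub>M\<^esub>" by (simp add: S_zero)
    qed
    thus "l_ann R M act N \<noteq> {}" by blast
  next
    fix f assume f: "f \<in> l_ann R M act N"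
    have fc: "f \<in> carrier S" using l_annD1[OF f] .
    show "\<ominus>\<^bsub>S\<^esub> f \<in> l_ann R M act N"
    proof (rule l_annI[OF Sr.a_inv_closed[OF fc]])
      fix x assume x: "x \<in> N"
      hence "x \<in> carrier M" using NC by blast
      thus "(\<ominus>\<^bsub>S\<^esub> f) x = \<zero>\<^bsub>M\<^esub>" using l_annD2[OF f x] by (simp add: S_neg[OF fc])
    qed
  next
    fix f g assume f: "f \<in> l_ann R M act N" and g: "g \<in> l_ann R M act N"
    have fc: "f \<in> carrier S" "g \<in> carrier S" using l_annD1 f g by auto
    show "f \<oplus>\<^bsub>S\<^esub> g \<in> l_ann R M act N"
    proof (rule l_annI[OF Sr.a_closed[OF fc]])
      fix x assume x: "x \<in> N"
      hence "x \<in> carrier M" using NC by blast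
      thus "(f \<oplus>\<^bsub>S\<^esub> g) x = \<zero>\<^bsub>M\<^esub>" using l_annD2[OF f x] l_annD2[OF g x] by (simp add: S_add)
    qed
  qed
next
  fix a x assume a: "a \<in> l_ann R M act N" and x: "x \<in> carrier S"
  have NC: "N \<subseteq> carrier M" using fi_subset[OF N] .
  have ac: "a \<in> carrier S" using l_annD1[OF a] .
  show "x \<otimes>\<^bsub>S\<^esub> a \<in> l_ann R M act N"
  proof (rule l_annI[OF Sr.m_closed[OF x ac]])
    fix m assume m: "m \<in> N"
    hence "m \<in> carrier M" using NC by blast
    thus "(x \<otimes>\<^bsub>S\<^esub> a) m = \<zero>\<^bsub>M\<^esub>" using l_annD2[OF a m] x
      by (simp add: S_mult End_zero S_carrier)
  qed
  show "a \<otimes>\<^bsub>S\<^esub> x \<in> l_ann R M act N"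
  proof (rule l_annI[OF Sr.m_closed[OF ac x]])
    fix m assume m: "m \<in> N"
    hence mc: "m \<in> carrier M" using NC by blast
    have "x m \<in> N" using N x m unfolding fully_invariant_def S_carrier by blast
    thus "(a \<otimes>\<^bsub>S\<^esub> x) m = \<zero>\<^bsub>M\<^esub>" using l_annD2[OF a] mc by (simp add: S_mult)
  qed
qed

lemma semiprime_S:
  assumes sp: "semiprime_module R M act" and a: "a \<in> carrier S"
    and h: "\<And>u. u \<in> carrier S \<Longrightarrow> a \<otimes>\<^bsub>S\<^esub> u \<otimes>\<^bsub>S\<^esub> a = \<zero>\<^bsub>S\<^esub>"
  shows "a = \<zero>\<^bsub>S\<^esub>"
proof -
  have aE: "a \<in> End_set R M act" using a S_carrier by simp
  define K where "K = {m \<in> carrier M. \<forall>s\<in>carrier S. a (s m) = \<zero>\<^bsub>M\<^esub>}"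
  have KC: "K \<subseteq> carrier M" unfolding K_def by blast
  have sE: "s \<in> End_set R M act" if "s \<in> carrier S" for s using that S_carrier by simp
  have Kfi: "fully_invariant R M act K"
    unfolding fully_invariant_def submodule_def
  proof (intro conjI ballI)
    show "subgroup K (add_monoid M)"
    proof (rule Mg.add.subgroupI)
      show "K \<subseteq> carrier M" using KC by simp
      have "\<zero>\<^bsub>M\<^esub> \<in> K" unfolding K_def using aE sE by (auto simp: End_zero)
      thus "K \<noteq> {}" by blast
    next
      fix m assume m: "m \<in> K"
      show "\<ominus>\<^bsub>M\<^esub> m \<in> K"
        using m aE sE unfolding K_def
        by (auto simp: End_neg End_closed)
    next
      fix m n assume m: "m \<in> K" and n: "n \<in> K"
      show "m \<oplus>\<^bsub>M\<^esub> n \<in> K"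
        using m n aE sE unfolding K_def
        by (auto simp: End_add End_closed)
    qed
  next
    fix m r assume m: "m \<in> K" and r: "r \<in> carrier R"
    show "act m r \<in> K" using m r aE sE unfolding K_def
      by (auto simp: End_act End_closed act_closed act_zero)
  next
    fix f m assume f: "f \<in> End_set R M act" and m: "m \<in> K"
    have fc: "f \<in> carrier S" using f S_carrier by simp
    have mc: "m \<in> carrier M" using m KC by blast
    show "f m \<in> K" unfolding K_def
    proof (intro CollectI conjI ballI)
      show "f m \<in> carrier M" using End_closed[OF f mc] .
      fix s assume s: "s \<in> carrier S"
      have "a (s (f m)) = a ((s \<otimes>\<^bsub>S\<^esub> f) m)" using mc by (simp add: S_mult)
      also have "\<dots> = \<zero>\<^bsub>M\<^esub>" using m Sr.m_closed[OF s fc] unfolding K_def by blast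
      finally show "a (s (f m)) = \<zero>\<^bsub>M\<^esub>" .
    qed
  qed
  let ?T = "l_ann R M act K"
  have Tid: "ideal ?T S" by (rule l_ann_ideal[OF Kfi])
  have aT: "a \<in> ?T" unfolding l_ann_def
  proof (intro CollectI conjI ballI aE)
    fix m assume m: "m \<in> K"
    have mc: "m \<in> carrier M" using m KC by blast
    have "a m = a (\<one>\<^bsub>S\<^esub> m)" using mc by (simp add: S_one)
    also have "\<dots> = \<zero>\<^bsub>M\<^esub>" using m Sr.one_closed unfolding K_def by blast
    finally show "a m = \<zero>\<^bsub>M\<^esub>" .
  qed
  have aK: "a m \<in> K" if m: "m \<in> carrier M" for m
    unfolding K_def
  proof (intro CollectI conjI ballI)
    show "a m \<in> carrier M" using End_closed[OF aE m] .
    fix s assume s: "s \<in> carrier S"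
    have "a (s (a m)) = (a \<otimes>\<^bsub>S\<^esub> s \<otimes>\<^bsub>S\<^esub> a) m" using m s aE
      by (simp add: S_mult End_closed sE)
    also have "\<dots> = \<zero>\<^bsub>M\<^esub>" using h[OF s] m by (simp add: S_zero)
    finally show "a (s (a m)) = \<zero>\<^bsub>M\<^esub>" .
  qed
  obtain \<P> where P: "\<P> \<noteq> {}" "\<forall>P\<in>\<P>. prime_in R M act P" "{\<zero>\<^bsub>M\<^esub>} = \<Inter>\<P>"
    using sp unfolding semiprime_module_def semiprime_in_def by blast
  have inP: "a m \<in> P" if m: "m \<in> carrier M" and PP: "P \<in> \<P>" for m P
  proof -
    have pr: "prime_in R M act P" using P PP by blast
    have Psub: "subgroup P (add_monoid M)"
      using pr unfolding prime_in_def fully_invariant_def submodule_def by blast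
    have "ideal_image M ?T K \<subseteq> P"
      unfolding ideal_image_def
    proof (rule Mg.add.generate_subgroup_incl[OF _ Psub])
      have "\<zero>\<^bsub>M\<^esub> \<in> P" using subgroup.one_closed[OF Psub] by simp
      thus "{f x |f x. f \<in> ?T \<and> x \<in> K} \<subseteq> P" unfolding l_ann_def by auto
    qed
    moreover have "\<forall>T N'. ideal T S \<longrightarrow> fully_invariant R M act N' \<longrightarrow>
        ideal_image M T N' \<subseteq> P \<longrightarrow> ideal_image M T (carrier M) \<subseteq> P \<or> N' \<subseteq> P"
      using pr unfolding prime_in_def by (rule conjunct2)
    ultimately have "ideal_image M ?T (carrier M) \<subseteq> P \<or> K \<subseteq> P"
      using Tid Kfi by blast
    moreover have "a m \<in> ideal_image M ?T (carrier M)"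
      unfolding ideal_image_def using aT m by (intro generate.incl) blast
    ultimately show ?thesis using aK[OF m] by blast
  qed
  have "a m = \<zero>\<^bsub>M\<^esub>" if m: "m \<in> carrier M" for m
  proof -
    have "a m \<in> \<Inter>\<P>" using inP[OF m] by blast
    thus ?thesis using P(3) by blast
  qed
  thus ?thesis using aE Sr.zero_closed unfolding S_carrier
    by (intro End_eqI) (auto simp: S_zero)
qed

lemma main:
  assumes sp: "semiprime_module R M act" and acc: "acc_principal_left S"
  shows "(quasi_Baer R M act \<longleftrightarrow> endo_AIP R M act) \<and>
         (endo_AIP R M act \<longleftrightarrow> centrally_endo_AIP R M act)"
proof -
  have spS: "\<And>a. a \<in> carrier S \<Longrightarrow> (\<And>u. u \<in> carrier S \<Longrightarrow> a \<otimes>\<^bsub>S\<^esub> u \<otimes>\<^bsub>S\<^esub> a = \<zero>\<^bsub>S\<^esub>) \<Longrightarrow> a = \<zero>\<^bsub>S\<^esub>"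
    using semiprime_S[OF sp] by blast
  have unit_e: "a \<otimes>\<^bsub>S\<^esub> e = a"
    if e: "e \<in> carrier S" "e \<otimes>\<^bsub>S\<^esub> e = e" and a: "a \<in> principal_left_ideal S e" for a e
  proof -
    obtain s where s: "s \<in> carrier S" "a = s \<otimes>\<^bsub>S\<^esub> e" using a unfolding principal_left_ideal_def by blast
    show ?thesis using s e by (simp add: Sr.m_assoc)
  qed
  have qb_aip: "endo_AIP R M act" if q: "quasi_Baer R M act"
    unfolding endo_AIP_def
  proof (intro allI impI)
    fix N assume N: "fully_invariant R M act N"
    obtain e where e: "e \<in> carrier S" "e \<otimes>\<^bsub>S\<^esub> e = e" "l_ann R M act N = principal_left_ideal S e"
      using q N unfolding quasi_Baer_def by blast
    show "right_s_unital S (l_ann R M act N)"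
      unfolding right_s_unital_def e(3)
    proof
      fix a assume a: "a \<in> principal_left_ideal S e"
      show "\<exists>x\<in>principal_left_ideal S e. a \<otimes>\<^bsub>S\<^esub> x = a"
        using unit_e[OF e(1) e(2) a] Sr.PL_self[OF e(1)] by blast
    qed
  qed
  have aip_qb: "quasi_Baer R M act" if q: "endo_AIP R M act"
    unfolding quasi_Baer_def
  proof (intro allI impI)
    fix N assume N: "fully_invariant R M act N"
    have "right_s_unital S (l_ann R M act N)" using q N unfolding endo_AIP_def by blast
    thus "\<exists>e\<in>carrier S. e \<otimes>\<^bsub>S\<^esub> e = e \<and> l_ann R M act N = principal_left_ideal S e"
      using Sr.s_unital_idem[OF l_ann_ideal[OF N] _ acc] by blast
  qed
  have aip_caip: "centrally_endo_AIP R M act" if q: "endo_AIP R M act"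
    unfolding centrally_endo_AIP_def
  proof (intro allI impI)
    fix N assume N: "fully_invariant R M act N"
    have "right_s_unital S (l_ann R M act N)" using q N unfolding endo_AIP_def by blast
    then obtain e where e: "e \<in> carrier S" "e \<otimes>\<^bsub>S\<^esub> e = e" "l_ann R M act N = principal_left_ideal S e"
      using Sr.s_unital_idem[OF l_ann_ideal[OF N] _ acc] by blast
    have cen: "\<forall>s\<in>carrier S. e \<otimes>\<^bsub>S\<^esub> s = s \<otimes>\<^bsub>S\<^esub> e"
      using Sr.idem_central[OF spS l_ann_ideal[OF N] e(1) e(2) e(3)] by blast
    show "centrally_s_unital S (l_ann R M act N)"
      unfolding centrally_s_unital_def e(3)
    proof
      fix a assume a: "a \<in> principal_left_ideal S e"
      show "\<exists>z\<in>principal_left_ideal S e. (\<forall>s\<in>carrier S. z \<otimes>\<^bsub>S\<^esub> s = s \<otimes>\<^bsub>S\<^esub> z) \<and> a \<otimes>\<^bsub>S\<^esub> z = a"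
        using unit_e[OF e(1) e(2) a] Sr.PL_self[OF e(1)] cen by blast
    qed
  qed
  have caip_aip: "endo_AIP R M act" if q: "centrally_endo_AIP R M act"
    using q unfolding centrally_endo_AIP_def endo_AIP_def centrally_s_unital_def right_s_unital_def
    by meson
  show ?thesis using qb_aip aip_qb aip_caip caip_aip by argo
qed

end

theorem proposition3p10:
  fixes R :: "('r,'a) ring_scheme" and M :: "('m,'b) ring_scheme" and act :: "'m \<Rightarrow> 'r \<Rightarrow> 'm"
  assumes "right_module R M act"
    and "semiprime_module R M act"
    and "acc_principal_left (End_ring R M act)"
  shows "(quasi_Baer R M act \<longleftrightarrow> endo_AIP R M act) \<and>
         (endo_AIP R M act \<longleftrightarrow> centrally_endo_AIP R M act)"
  using rmod.main[OF rmod.intro[OF assms(1)] assms(2) assms(3)] .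

end
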